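(* Let $\Omega\subset\mathbb{R}^d$ be compact, $\omega:\Omega\to[0,\infty)$ integrable, and $\mathcal{F}_K(\Omega)$ a $K$-dimensional space of continuous real functions on $\Omega$ containing the constant function $1$, such that $\langle u,v\rangle=\int_\Omega \omega uv\,\mathrm{d}\boldsymbol{x}$ is an inner product on $\mathcal{F}_K(\Omega)$. Let $(\mathbf{x}_n)_{n\in\mathbb{N}}\subset\Omega$ and, for each $N$, numbers $r_1,\dots,r_N\geq 0$ (possibly depending on $N$) be such that $$\lim_{N\to\infty}\sum_{n=1}^N r_n u(\mathbf{x}_n)v(\mathbf{x}_n)=\int_\Omega\omega(\boldsymbol{x})u(\boldsymbol{x})v(\boldsymbol{x})\,\mathrm{d}\boldsymbol{x}\quad\text{for all } u,v\in\mathcal{F}_K(\Omega),$$ and such that, for all sufficiently large $N$, the set $\{\mathbf{x}_n : 1\le n\le N,\ r_n>0\}$ is $\mathcal{F}_K(\Omega)$-unisolvent. Then there exists $N_0\in\mathbb{N}$ such that for all $N\geq N_0$ the least squares cubature formula $C_N^{\mathrm{LS}}[f]=\sum_{n=1}^N w_n^{\mathrm{LS}}f(\mathbf{x}_n)$ has all weights $w_n^{\mathrm{LS}}\geq 0$.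
   Context: Fix a basis $\varphi_1,\dots,\varphi_K$ of $\mathcal{F}_K(\Omega)$, let $\Phi\in\mathbb{R}^{K\times N}$ with $\Phi_{k,n}=\varphi_k(\mathbf{x}_n)$ and $\mathbf{m}=(m_k)$ with $m_k=\int_\Omega\omega\varphi_k\,\mathrm{d}\boldsymbol{x}$. The LS weights are defined by $\mathbf{w}^{\mathrm{LS}}=\arg\min\{\sum_{n: r_n>0} w_n^2/r_n : \Phi\mathbf{w}=\mathbf{m},\ w_n=0 \text{ whenever } r_n=0\}$ (the minimizer of the weighted Euclidean norm $\|R^{-1/2}\mathbf{w}\|_2$, $R=\mathrm{diag}(r_1,\dots,r_N)$, over the exactness solutions, where $r_n=0$ is interpreted as the constraint $w_n=0$). A point set is $\mathcal{F}_K(\Omega)$-unisolvent if the only $f\in\mathcal{F}_K(\Omega)$ vanishing at all its points is $f\equiv 0$ on $\Omega$. *)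

theory Defs
  imports "HOL-Analysis.Analysis"
begin

definition Fspace :: "'a set \<Rightarrow> (nat \<Rightarrow> 'a \<Rightarrow> real) \<Rightarrow> nat \<Rightarrow> ('a \<Rightarrow> real) set" where
  "Fspace \<Omega> \<phi> K = {f. \<exists>c::nat \<Rightarrow> real. \<forall>y\<in>\<Omega>. f y = (\<Sum>k<K. c k * \<phi> k y)}"

definition unisolvent :: "('a \<Rightarrow> real) set \<Rightarrow> 'a set \<Rightarrow> 'a set \<Rightarrow> bool" where
  "unisolvent F \<Omega> P \<longleftrightarrow> (\<forall>f\<in>F. (\<forall>p\<in>P. f p = 0) \<longrightarrow> (\<forall>y\<in>\<Omega>. f y = 0))"

definition moments :: "'a::euclidean_space set \<Rightarrow> ('a \<Rightarrow> real) \<Rightarrow> (nat \<Rightarrow> 'a \<Rightarrow> real) \<Rightarrow> nat \<Rightarrow> real" where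
  "moments \<Omega> \<omega> \<phi> k = integral \<Omega> (\<lambda>y. \<omega> y * \<phi> k y)"

definition LS_feasible :: "(nat \<Rightarrow> 'a \<Rightarrow> real) \<Rightarrow> nat \<Rightarrow> (nat \<Rightarrow> real) \<Rightarrow> (nat \<Rightarrow> 'a)
    \<Rightarrow> (nat \<Rightarrow> real) \<Rightarrow> nat \<Rightarrow> (nat \<Rightarrow> real) \<Rightarrow> bool" where
  "LS_feasible \<phi> K m x r N w \<longleftrightarrow>
     (\<forall>n. n \<notin> {1..N} \<longrightarrow> w n = 0) \<and>
     (\<forall>n\<in>{1..N}. r n = 0 \<longrightarrow> w n = 0) \<and>
     (\<forall>k<K. (\<Sum>n=1..N. w n * \<phi> k (x n)) = m k)"

definition LS_cost :: "(nat \<Rightarrow> real) \<Rightarrow> nat \<Rightarrow> (nat \<Rightarrow> real) \<Rightarrow> real" where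
  "LS_cost r N w = (\<Sum>n\<in>{n\<in>{1..N}. r n > 0}. (w n)^2 / r n)"

definition LS_weights :: "(nat \<Rightarrow> 'a \<Rightarrow> real) \<Rightarrow> nat \<Rightarrow> (nat \<Rightarrow> real) \<Rightarrow> (nat \<Rightarrow> 'a)
    \<Rightarrow> (nat \<Rightarrow> real) \<Rightarrow> nat \<Rightarrow> nat \<Rightarrow> real" where
  "LS_weights \<phi> K m x r N = (THE w. LS_feasible \<phi> K m x r N w \<and>
       (\<forall>v. LS_feasible \<phi> K m x r N v \<longrightarrow> LS_cost r N w \<le> LS_cost r N v))"

end

theory Submission
  imports Defs "Jordan_Normal_Form.Determinant"
begin

lemma solve_lin:
  fixes A :: "nat \<Rightarrow> nat \<Rightarrow> real" and e :: "nat \<Rightarrow> real"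
  assumes inj: "\<forall>c. (\<forall>j<K. (\<Sum>k<K. A j k * c k) = 0) \<longrightarrow> (\<forall>k<K. c k = 0)"
  shows "\<exists>c. \<forall>j<K. (\<Sum>k<K. A j k * c k) = e j"
proof -
  define M where "M = mat K K (\<lambda>(i,j). A i j)"
  have M: "M \<in> carrier_mat K K" unfolding M_def by auto
  have mv: "vec_index (M *\<^sub>v v) j = (\<Sum>k<K. A j k * vec_index v k)" if "v \<in> carrier_vec K" "j < K" for v j
    using that unfolding M_def by (auto simp: mult_mat_vec_def scalar_prod_def lessThan_atLeast0 intro!: sum.cong)
  have "det M \<noteq> 0"
  proof
    assume "det M = 0"
    then obtain v where v: "v \<in> carrier_vec K" "v \<noteq> 0\<^sub>v K" "M *\<^sub>v v = 0\<^sub>v K"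
      using det_0_iff_vec_prod_zero[OF M] by auto
    have "\<forall>j<K. (\<Sum>k<K. A j k * vec_index v k) = 0"
    proof (intro allI impI)
      fix j assume "j < K"
      have "vec_index (M *\<^sub>v v) j = 0" using v(3) \<open>j<K\<close> by simp
      thus "(\<Sum>k<K. A j k * vec_index v k) = 0" using mv[OF v(1) \<open>j<K\<close>] by simp
    qed
    with inj have "\<forall>k<K. vec_index v k = 0" by blast
    hence "v = 0\<^sub>v K" using v(1) by (intro eq_vecI) auto
    with v(2) show False by simp
  qed
  from det_non_zero_imp_unit[OF M this, of "()"]
  obtain B where B: "B \<in> carrier_mat K K" "M * B = 1\<^sub>m K"
    unfolding Units_def ring_mat_def by auto
  define u where "u = B *\<^sub>v vec K e"
  have u: "u \<in> carrier_vec K" unfolding u_def using B by auto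
  have "M *\<^sub>v u = vec K e"
    unfolding u_def using B M by (simp add: assoc_mult_mat_vec[symmetric])
  show ?thesis
  proof (intro exI allI impI)
    fix j assume j: "j < K"
    have "(\<Sum>k<K. A j k * vec_index u k) = vec_index (M *\<^sub>v u) j" using mv[OF u j] by simp
    also have "\<dots> = e j" using \<open>M *\<^sub>v u = vec K e\<close> j by simp
    finally show "(\<Sum>k<K. A j k * (\<lambda>k. vec_index u k) k) = e j" by simp
  qed
qed

lemma quad_min:
  fixes Gl :: "nat \<Rightarrow> nat \<Rightarrow> real"
  assumes K: "K > 0"
    and pos: "\<forall>c. (\<exists>k<K. c k \<noteq> 0) \<longrightarrow> (\<Sum>j<K. \<Sum>k<K. c j * c k * Gl j k) > 0"
  shows "\<exists>\<mu>>0. \<forall>c. (\<Sum>j<K. \<Sum>k<K. c j * c k * Gl j k) \<ge> \<mu> * (\<Sum>k<K. \<bar>c k\<bar>)^2"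
proof -
  define Q where "Q = (\<lambda>c::nat\<Rightarrow>real. (\<Sum>j<K. \<Sum>k<K. c j * c k * Gl j k))"
  define S where "S = (\<lambda>k::nat. if k<K then {-1..1::real} else {0})"
  define T where "T = PiE UNIV S \<inter> {c. (\<Sum>k<K. \<bar>c k\<bar>) = 1}"
  have "compactin (product_topology (\<lambda>_. euclideanreal) UNIV) (PiE UNIV S)"
    by (simp add: compactin_PiE S_def)
  hence c1: "compact (PiE UNIV S)" by (simp add: euclidean_product_topology)
  have c2: "closed {c::nat\<Rightarrow>real. (\<Sum>k<K. \<bar>c k\<bar>) = 1}"
    by (intro closed_Collect_eq continuous_on_sum continuous_on_rabs continuous_on_const
        continuous_on_product_coordinates)
  have cT: "compact T" unfolding T_def using c1 c2 by (rule compact_Int_closed)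
  define c0 where "c0 = (\<lambda>k::nat. if k = 0 then 1 else 0::real)"
  have "c0 \<in> T" using K unfolding T_def S_def c0_def
    by (auto simp: PiE_def Pi_def extensional_def)
  hence neT: "T \<noteq> {}" by auto
  have contQ: "continuous_on T Q" unfolding Q_def
    by (intro continuous_on_sum continuous_on_mult continuous_on_const
        continuous_on_subset[OF continuous_on_product_coordinates] subset_UNIV)
  obtain cm where cm: "cm \<in> T" "\<forall>y\<in>T. Q cm \<le> Q y"
    using continuous_attains_inf[OF cT neT contQ] by blast
  have "\<exists>k<K. cm k \<noteq> 0"
  proof (rule ccontr)
    assume "\<not> ?thesis"
    hence "(\<Sum>k<K. \<bar>cm k\<bar>) = 0" by simp
    with cm(1) show False unfolding T_def by simp
  qed
  hence mupos: "Q cm > 0" using pos unfolding Q_def by blast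
  show ?thesis
  proof (intro exI conjI allI)
    show "Q cm > 0" by fact
    fix c :: "nat \<Rightarrow> real"
    define s where "s = (\<Sum>k<K. \<bar>c k\<bar>)"
    have s0: "s \<ge> 0" unfolding s_def by (simp add: sum_nonneg)
    show "Q cm * s^2 \<le> (\<Sum>j<K. \<Sum>k<K. c j * c k * Gl j k)"
    proof (cases "s = 0")
      case True
      hence "\<forall>k<K. c k = 0" unfolding s_def by (simp add: sum_nonneg_eq_0_iff)
      thus ?thesis using True by simp
    next
      case False
      hence sp: "s > 0" using s0 by simp
      define c' where "c' = (\<lambda>k. if k<K then c k / s else 0)"
      have le: "\<bar>c k\<bar> \<le> s" if "k<K" for k
        unfolding s_def using that by (intro member_le_sum) auto
      have "c' \<in> PiE UNIV S" unfolding c'_def S_def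
        using le sp by (auto simp: PiE_def Pi_def extensional_def abs_le_iff divide_le_eq le_divide_eq) (metis minus_le_iff)
      moreover have "(\<Sum>k<K. \<bar>c' k\<bar>) = 1"
      proof -
        have "(\<Sum>k<K. \<bar>c' k\<bar>) = (\<Sum>k<K. \<bar>c k\<bar> / s)"
          unfolding c'_def using sp by (intro sum.cong) auto
        also have "\<dots> = s / s" by (simp only: sum_divide_distrib[symmetric] s_def)
        finally show ?thesis using sp by simp
      qed
      ultimately have "c' \<in> T" unfolding T_def by simp
      hence "Q cm \<le> Q c'" using cm by blast
      also have "Q c' = Q c / s^2"
        unfolding Q_def c'_def
        by (simp add: sum_divide_distrib power2_eq_square)
      finally show ?thesis using sp unfolding Q_def by (simp add: le_divide_eq mult.commute)
    qed
  qed
qed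

lemma LS_char:
  fixes \<phi> :: "nat \<Rightarrow> 'a \<Rightarrow> real" and r :: "nat \<Rightarrow> real" and g :: "'a \<Rightarrow> real"
  assumes rnn: "\<forall>n\<in>{1..N}. r n \<ge> 0"
    and gsol: "\<forall>k<K. (\<Sum>n=1..N. r n * g (x n) * \<phi> k (x n)) = m k"
    and grep: "\<forall>n\<in>{1..N}. g (x n) = (\<Sum>k<K. b k * \<phi> k (x n))"
  shows "LS_weights \<phi> K m x r N = (\<lambda>n. if n \<in> {1..N} then r n * g (x n) else 0)"
proof -
  define w where "w = (\<lambda>n. if n \<in> {1..N} then r n * g (x n) else 0)"
  define S where "S = {n\<in>{1..N}. r n > 0}"
  have finS: "finite S" unfolding S_def by auto
  have feas: "LS_feasible \<phi> K m x r N w"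
    unfolding LS_feasible_def
  proof (intro conjI allI impI ballI)
    fix k assume "k < K"
    have "(\<Sum>n=1..N. w n * \<phi> k (x n)) = (\<Sum>n=1..N. r n * g (x n) * \<phi> k (x n))"
      unfolding w_def by (intro sum.cong) auto
    thus "(\<Sum>n=1..N. w n * \<phi> k (x n)) = m k" using gsol \<open>k<K\<close> by simp
  qed (auto simp: w_def)
  have key: "LS_cost r N v = LS_cost r N w + (\<Sum>n\<in>S. (v n - w n)^2 / r n)"
    if fv: "LS_feasible \<phi> K m x r N v" for v
  proof -
    define d where "d = (\<lambda>n. v n - w n)"
    have dz: "d n = 0" if "n \<in> {1..N}" "n \<notin> S" for n
    proof -
      have "r n = 0" using that rnn unfolding S_def by force
      thus ?thesis using fv that unfolding d_def w_def LS_feasible_def by auto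
    qed
    have dphi: "(\<Sum>n=1..N. d n * \<phi> k (x n)) = 0" if "k < K" for k
    proof -
      have "(\<Sum>n=1..N. d n * \<phi> k (x n)) = (\<Sum>n=1..N. v n * \<phi> k (x n)) - (\<Sum>n=1..N. w n * \<phi> k (x n))"
        unfolding d_def by (simp add: sum_subtractf left_diff_distrib)
      thus ?thesis using fv feas that unfolding LS_feasible_def by simp
    qed
    have cross: "(\<Sum>n\<in>S. w n * d n / r n) = 0"
    proof -
      have "(\<Sum>n\<in>S. w n * d n / r n) = (\<Sum>n\<in>S. g (x n) * d n)"
        unfolding w_def S_def by (intro sum.cong) auto
      also have "\<dots> = (\<Sum>n=1..N. g (x n) * d n)"
        by (rule sum.mono_neutral_left) (auto simp: S_def dz)
      also have "\<dots> = (\<Sum>n=1..N. \<Sum>k<K. b k * (d n * \<phi> k (x n)))"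
        using grep by (intro sum.cong) (auto simp: sum_distrib_left sum_distrib_right mult_ac)
      also have "\<dots> = (\<Sum>k<K. b k * (\<Sum>n=1..N. d n * \<phi> k (x n)))"
        by (simp add: sum.swap[of _ _ "{..<K}"] sum_distrib_left)
      also have "\<dots> = 0" using dphi by simp
      finally show ?thesis .
    qed
    have vwd: "v n = w n + d n" for n unfolding d_def by simp
    have "LS_cost r N v = (\<Sum>n\<in>S. (w n)^2 / r n + 2 * (w n * d n / r n) + (d n)^2 / r n)"
      unfolding LS_cost_def S_def[symmetric] vwd
      by (intro sum.cong) (auto simp: S_def power2_eq_square field_simps)
    also have "\<dots> = LS_cost r N w + 2 * (\<Sum>n\<in>S. w n * d n / r n) + (\<Sum>n\<in>S. (d n)^2 / r n)"
      unfolding LS_cost_def S_def[symmetric] by (simp add: sum.distrib sum_distrib_left)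
    finally show ?thesis using cross unfolding d_def by simp
  qed
  have nn: "(\<Sum>n\<in>S. (v n - w n)^2 / r n) \<ge> 0" for v
    by (intro sum_nonneg) (auto simp: S_def)
  show ?thesis
    unfolding LS_weights_def w_def[symmetric]
  proof (rule the_equality)
    show "LS_feasible \<phi> K m x r N w \<and> (\<forall>v. LS_feasible \<phi> K m x r N v \<longrightarrow> LS_cost r N w \<le> LS_cost r N v)"
      using feas key nn by (metis le_add_same_cancel1)
  next
    fix v assume v: "LS_feasible \<phi> K m x r N v \<and> (\<forall>u. LS_feasible \<phi> K m x r N u \<longrightarrow> LS_cost r N v \<le> LS_cost r N u)"
    hence "LS_cost r N v \<le> LS_cost r N w" using feas by blast
    with key[of v] v have "(\<Sum>n\<in>S. (v n - w n)^2 / r n) \<le> 0" by simp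
    with nn[of v] have "(\<Sum>n\<in>S. (v n - w n)^2 / r n) = 0" by simp
    hence "\<forall>n\<in>S. (v n - w n)^2 / r n = 0"
      using finS by (subst (asm) sum_nonneg_eq_0_iff) (auto simp: S_def)
    hence inS: "v n = w n" if "n \<in> S" for n using that by (auto simp: S_def)
    show "v = w"
    proof
      fix n
      show "v n = w n"
      proof (cases "n \<in> S")
        case True thus ?thesis by (rule inS)
      next
        case False
        show ?thesis
        proof (cases "n \<in> {1..N}")
          case True
          with False rnn have "r n = 0" unfolding S_def by force
          thus ?thesis using v True unfolding LS_feasible_def w_def by auto
        next
          case False thus ?thesis using v unfolding LS_feasible_def w_def by auto
        qed
      qed
    qed
  qed
qed

theorem mainTheorem5:
  fixes \<Omega> :: "'a::euclidean_space set"
    and \<omega> :: "'a \<Rightarrow> real"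
    and \<phi> :: "nat \<Rightarrow> 'a \<Rightarrow> real"
    and K :: nat
    and x :: "nat \<Rightarrow> 'a"
    and r :: "nat \<Rightarrow> nat \<Rightarrow> real"
  assumes cpt: "compact \<Omega>"
    and \<omega>_nonneg: "\<forall>y\<in>\<Omega>. \<omega> y \<ge> 0"
    and \<omega>_int: "\<omega> integrable_on \<Omega>"
    and cont: "\<forall>k<K. continuous_on \<Omega> (\<phi> k)"
    and indep: "\<forall>c::nat \<Rightarrow> real. (\<forall>y\<in>\<Omega>. (\<Sum>k<K. c k * \<phi> k y) = 0) \<longrightarrow> (\<forall>k<K. c k = 0)"
    and const: "(\<lambda>y. 1) \<in> Fspace \<Omega> \<phi> K"
    and inner: "\<forall>f\<in>Fspace \<Omega> \<phi> K. (\<exists>y\<in>\<Omega>. f y \<noteq> 0) \<longrightarrow>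
                  integral \<Omega> (\<lambda>y. \<omega> y * f y * f y) > 0"
    and pts: "\<forall>n. x n \<in> \<Omega>"
    and r_nonneg: "\<forall>N. \<forall>n\<in>{1..N}. r N n \<ge> 0"
    and conv: "\<forall>u\<in>Fspace \<Omega> \<phi> K. \<forall>v\<in>Fspace \<Omega> \<phi> K.
                 (\<lambda>N. \<Sum>n=1..N. r N n * u (x n) * v (x n))
                   \<longlonglongrightarrow> integral \<Omega> (\<lambda>y. \<omega> y * u y * v y)"
    and unisolv: "\<exists>M. \<forall>N\<ge>M. unisolvent (Fspace \<Omega> \<phi> K) \<Omega> {x n | n. n \<in> {1..N} \<and> r N n > 0}"
  shows "\<exists>N0. \<forall>N\<ge>N0. \<forall>n\<in>{1..N}.
           LS_weights \<phi> K (moments \<Omega> \<omega> \<phi>) x (r N) N n \<ge> 0"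
proof -
  let ?F = "Fspace \<Omega> \<phi> K"
  obtain a where a: "\<forall>y\<in>\<Omega>. 1 = (\<Sum>k<K. a k * \<phi> k y)"
    using const unfolding Fspace_def by auto
  have Kpos: "K > 0"
  proof (rule ccontr)
    assume "\<not> K > 0"
    hence "K = 0" by simp
    with a pts show False by auto
  qed
  define f where "f = (\<lambda>c y. \<Sum>k<K. c k * \<phi> k y)"
  have inF: "f c \<in> ?F" for c unfolding f_def Fspace_def by auto
  have phiF: "\<phi> j \<in> ?F" if "j < K" for j
  proof -
    have "\<forall>y\<in>\<Omega>. \<phi> j y = (\<Sum>k<K. (if k = j then 1 else 0) * \<phi> k y)"
    proof
      fix y
      have "(\<Sum>k<K. (if k = j then 1 else 0) * \<phi> k y) = (\<Sum>k<K. if k = j then \<phi> k y else 0)"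
        by (intro sum.cong) auto
      thus "\<phi> j y = (\<Sum>k<K. (if k = j then 1 else 0) * \<phi> k y)" using that by simp
    qed
    thus ?thesis unfolding Fspace_def mem_Collect_eq by (rule exI[where x="\<lambda>k. if k = j then 1 else 0"])
  qed
  define G where "G = (\<lambda>N j k. \<Sum>n=1..N. r N n * \<phi> j (x n) * \<phi> k (x n))"
  define Gl where "Gl = (\<lambda>j k. integral \<Omega> (\<lambda>y. \<omega> y * \<phi> j y * \<phi> k y))"
  have GL: "(\<lambda>N. G N j k) \<longlonglongrightarrow> Gl j k" if "j < K" "k < K" for j k
    using conv phiF[OF that(1)] phiF[OF that(2)] unfolding G_def Gl_def by blast
  have quadN: "(\<Sum>j<K. \<Sum>k<K. c j * c k * G N j k) = (\<Sum>n=1..N. r N n * f c (x n) * f c (x n))" for c N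
  proof -
    have "(\<Sum>n=1..N. r N n * f c (x n) * f c (x n))
        = (\<Sum>n=1..N. \<Sum>j<K. \<Sum>k<K. c j * c k * (r N n * \<phi> j (x n) * \<phi> k (x n)))"
      unfolding f_def by (simp add: sum_distrib_left sum_distrib_right mult_ac)
    also have "\<dots> = (\<Sum>j<K. \<Sum>n=1..N. \<Sum>k<K. c j * c k * (r N n * \<phi> j (x n) * \<phi> k (x n)))"
      by (rule sum.swap)
    also have "\<dots> = (\<Sum>j<K. \<Sum>k<K. \<Sum>n=1..N. c j * c k * (r N n * \<phi> j (x n) * \<phi> k (x n)))"
      by (rule sum.cong[OF refl], rule sum.swap)
    also have "\<dots> = (\<Sum>j<K. \<Sum>k<K. c j * c k * G N j k)"
      unfolding G_def by (simp add: sum_distrib_left)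
    finally show ?thesis by simp
  qed
  have pos: "\<forall>c. (\<exists>k<K. c k \<noteq> 0) \<longrightarrow> (\<Sum>j<K. \<Sum>k<K. c j * c k * Gl j k) > 0"
  proof (intro allI impI)
    fix c :: "nat \<Rightarrow> real" assume ck: "\<exists>k<K. c k \<noteq> 0"
    have l1: "(\<lambda>N. \<Sum>j<K. \<Sum>k<K. c j * c k * G N j k) \<longlonglongrightarrow> (\<Sum>j<K. \<Sum>k<K. c j * c k * Gl j k)"
      by (intro tendsto_sum tendsto_mult tendsto_const GL) auto
    have l2: "(\<lambda>N. \<Sum>j<K. \<Sum>k<K. c j * c k * G N j k) \<longlonglongrightarrow> integral \<Omega> (\<lambda>y. \<omega> y * f c y * f c y)"
      unfolding quadN using conv inF by blast
    have eq: "(\<Sum>j<K. \<Sum>k<K. c j * c k * Gl j k) = integral \<Omega> (\<lambda>y. \<omega> y * f c y * f c y)"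
      using LIMSEQ_unique[OF l1 l2] .
    have "\<exists>y\<in>\<Omega>. f c y \<noteq> 0"
      using indep ck unfolding f_def by blast
    thus "(\<Sum>j<K. \<Sum>k<K. c j * c k * Gl j k) > 0"
      unfolding eq using inner inF by blast
  qed
  obtain \<mu> where mu: "\<mu> > 0" "\<forall>c. (\<Sum>j<K. \<Sum>k<K. c j * c k * Gl j k) \<ge> \<mu> * (\<Sum>k<K. \<bar>c k\<bar>)^2"
    using quad_min[OF Kpos pos] by blast
  have "\<exists>b>0. \<forall>y\<in>\<Omega>. \<bar>\<phi> k y\<bar> \<le> b" if "k < K" for k
  proof -
    have "compact (\<phi> k ` \<Omega>)" using compact_continuous_image cont cpt that by blast
    hence "bounded (\<phi> k ` \<Omega>)" by (rule compact_imp_bounded)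
    then obtain b where "b > 0" "\<forall>z\<in>\<phi> k ` \<Omega>. norm z \<le> b" using bounded_pos by blast
    thus ?thesis by auto
  qed
  then obtain Bk where Bk: "\<forall>k<K. Bk k > 0 \<and> (\<forall>y\<in>\<Omega>. \<bar>\<phi> k y\<bar> \<le> Bk k)" by metis
  define B where "B = 1 + (\<Sum>k<K. Bk k)"
  have Bpos: "B > 0" unfolding B_def using Bk by (smt (verit) lessThan_iff sum_nonneg)
  have Bb: "\<bar>\<phi> k y\<bar> \<le> B" if "k < K" "y \<in> \<Omega>" for k y
  proof -
    have "Bk k \<le> (\<Sum>k<K. Bk k)" using Bk that by (intro member_le_sum) auto
    thus ?thesis using Bk that unfolding B_def by force
  qed
  define e where "e = (\<lambda>N j. moments \<Omega> \<omega> \<phi> j - (\<Sum>n=1..N. r N n * \<phi> j (x n)))"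
  have el: "(\<lambda>N. e N j) \<longlonglongrightarrow> 0" if "j < K" for j
  proof -
    have "(\<lambda>N. \<Sum>n=1..N. r N n * \<phi> j (x n)) \<longlonglongrightarrow> moments \<Omega> \<omega> \<phi> j"
      using conv[rule_format, OF const phiF[OF that]] by (simp add: moments_def)
    hence "(\<lambda>N. e N j) \<longlonglongrightarrow> moments \<Omega> \<omega> \<phi> j - moments \<Omega> \<omega> \<phi> j"
      unfolding e_def by (intro tendsto_diff tendsto_const)
    thus ?thesis by simp
  qed
  define E where "E = (\<lambda>N. \<Sum>j<K. \<bar>e N j\<bar>)"
  have El: "E \<longlonglongrightarrow> 0" unfolding E_def
    using tendsto_sum[of "{..<K}" "\<lambda>j N. \<bar>e N j\<bar>" "\<lambda>_. 0" sequentially]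
    by (simp add: tendsto_rabs_zero el)
  have ev1: "eventually (\<lambda>N. \<forall>j\<in>{..<K}. \<forall>k\<in>{..<K}. \<bar>G N j k - Gl j k\<bar> < \<mu>/2) sequentially"
  proof (intro eventually_ball_finite ballI finite_lessThan)
    fix j k assume "j \<in> {..<K}" "k \<in> {..<K}"
    hence "eventually (\<lambda>N. dist (G N j k) (Gl j k) < \<mu>/2) sequentially"
      using GL mu(1) by (intro tendstoD) auto
    thus "eventually (\<lambda>N. \<bar>G N j k - Gl j k\<bar> < \<mu>/2) sequentially"
      by (simp add: dist_real_def)
  qed
  have ev2: "eventually (\<lambda>N. E N < \<mu> / (2*B)) sequentially"
    using order_tendstoD(2)[OF El] mu(1) Bpos by simp
  obtain N0 where N0: "\<forall>N\<ge>N0. (\<forall>j\<in>{..<K}. \<forall>k\<in>{..<K}. \<bar>G N j k - Gl j k\<bar> < \<mu>/2) \<and> E N < \<mu> / (2*B)"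
    using eventually_conj[OF ev1 ev2] unfolding eventually_sequentially by blast
  show ?thesis
  proof (intro exI allI impI ballI)
    fix N n assume NN0: "N \<ge> N0" and n: "n \<in> {1..N}"
    have close: "\<bar>G N j k - Gl j k\<bar> < \<mu>/2" if "j<K" "k<K" for j k using N0 NN0 that by blast
    have EN: "E N < \<mu> / (2*B)" using N0 NN0 by blast
    have pert: "(\<Sum>j<K. \<Sum>k<K. c j * c k * G N j k) \<ge> \<mu>/2 * (\<Sum>k<K. \<bar>c k\<bar>)^2" for c
    proof -
      have sq: "(\<Sum>k<K. \<bar>c k\<bar>)^2 = (\<Sum>j<K. \<Sum>k<K. \<bar>c j\<bar> * \<bar>c k\<bar>)"
        by (simp add: power2_eq_square sum_product)
      have "(\<Sum>j<K. \<Sum>k<K. c j * c k * (G N j k - Gl j k)) \<ge> (\<Sum>j<K. \<Sum>k<K. - (\<mu>/2 * (\<bar>c j\<bar> * \<bar>c k\<bar>)))"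
      proof (intro sum_mono)
        fix j k assume "j \<in> {..<K}" "k \<in> {..<K}"
        hence cl: "\<bar>G N j k - Gl j k\<bar> \<le> \<mu>/2" using close by (simp add: less_imp_le)
        have "\<bar>c j * c k * (G N j k - Gl j k)\<bar> \<le> (\<bar>c j\<bar> * \<bar>c k\<bar>) * (\<mu>/2)"
          unfolding abs_mult by (intro mult_left_mono cl) auto
        thus "- (\<mu>/2 * (\<bar>c j\<bar> * \<bar>c k\<bar>)) \<le> c j * c k * (G N j k - Gl j k)"
          by (simp add: abs_le_iff mult_ac)
      qed
      also have "(\<Sum>j<K. \<Sum>k<K. c j * c k * (G N j k - Gl j k))
          = (\<Sum>j<K. \<Sum>k<K. c j * c k * G N j k) - (\<Sum>j<K. \<Sum>k<K. c j * c k * Gl j k)"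
        by (simp add: right_diff_distrib sum_subtractf)
      finally have "(\<Sum>j<K. \<Sum>k<K. c j * c k * G N j k) \<ge> (\<Sum>j<K. \<Sum>k<K. c j * c k * Gl j k) - \<mu>/2 * (\<Sum>k<K. \<bar>c k\<bar>)^2"
        unfolding sq by (simp add: sum_negf sum_distrib_left)
      thus ?thesis using mu(2)[rule_format, of c] by simp
    qed
    have Qe: "(\<Sum>j<K. \<Sum>k<K. c j * c k * G N j k) = (\<Sum>j<K. c j * t j)"
      if "\<forall>j<K. (\<Sum>k<K. G N j k * c k) = t j" for c t
    proof -
      have "(\<Sum>j<K. \<Sum>k<K. c j * c k * G N j k) = (\<Sum>j<K. c j * (\<Sum>k<K. G N j k * c k))"
        by (simp add: sum_distrib_left mult_ac)
      also have "\<dots> = (\<Sum>j<K. c j * t j)" using that by simp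
      finally show ?thesis .
    qed
    have injG: "\<forall>c. (\<forall>j<K. (\<Sum>k<K. G N j k * c k) = 0) \<longrightarrow> (\<forall>k<K. c k = 0)"
    proof (intro allI impI)
      fix c :: "nat \<Rightarrow> real" and k assume h: "\<forall>j<K. (\<Sum>k<K. G N j k * c k) = 0" and k: "k < K"
      have "\<mu>/2 * (\<Sum>k<K. \<bar>c k\<bar>)^2 \<le> 0" using pert[of c] Qe[OF h] by simp
      hence "(\<Sum>k<K. \<bar>c k\<bar>)^2 \<le> 0" using mu(1) by (simp add: mult_le_0_iff)
      hence "(\<Sum>k<K. \<bar>c k\<bar>) = 0" by simp
      thus "c k = 0" using k by (simp add: sum_nonneg_eq_0_iff)
    qed
    obtain c where c: "\<forall>j<K. (\<Sum>k<K. G N j k * c k) = e N j"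
      using solve_lin[OF injG] by blast
    define s where "s = (\<Sum>k<K. \<bar>c k\<bar>)"
    have s0: "s \<ge> 0" unfolding s_def by (simp add: sum_nonneg)
    have "\<mu>/2 * s^2 \<le> (\<Sum>j<K. c j * e N j)" using pert[of c] Qe[OF c] unfolding s_def by simp
    also have "\<dots> \<le> (\<Sum>j<K. \<bar>c j\<bar> * E N)"
    proof (intro sum_mono)
      fix j assume "j \<in> {..<K}"
      hence "\<bar>e N j\<bar> \<le> E N" unfolding E_def by (intro member_le_sum) auto
      hence "\<bar>c j * e N j\<bar> \<le> \<bar>c j\<bar> * E N" unfolding abs_mult by (intro mult_left_mono) auto
      thus "c j * e N j \<le> \<bar>c j\<bar> * E N" by simp
    qed
    also have "\<dots> = s * E N" unfolding s_def by (simp add: sum_distrib_right)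
    finally have sE: "\<mu>/2 * s^2 \<le> s * E N" .
    have sb: "s * B < 1"
    proof (cases "s = 0")
      case True thus ?thesis by simp
    next
      case False
      hence "s > 0" using s0 by simp
      with sE have "\<mu>/2 * s \<le> E N" by (simp add: power2_eq_square)
      hence "\<mu>/2 * s < \<mu> / (2*B)" using EN by simp
      hence "s < 1 / B" using mu(1) Bpos by (simp add: field_simps)
      thus ?thesis using Bpos by (simp add: field_simps)
    qed
    define g where "g = (\<lambda>y. \<Sum>k<K. (a k + c k) * \<phi> k y)"
    have g1: "g y = 1 + (\<Sum>k<K. c k * \<phi> k y)" if "y \<in> \<Omega>" for y
      unfolding g_def using a that by (simp add: distrib_right sum.distrib)
    have gpos: "g y > 0" if "y \<in> \<Omega>" for y
    proof -
      have "\<bar>\<Sum>k<K. c k * \<phi> k y\<bar> \<le> (\<Sum>k<K. \<bar>c k\<bar> * B)"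
      proof -
        have "\<bar>\<Sum>k<K. c k * \<phi> k y\<bar> \<le> (\<Sum>k<K. \<bar>c k * \<phi> k y\<bar>)" by (rule sum_abs)
        also have "\<dots> \<le> (\<Sum>k<K. \<bar>c k\<bar> * B)"
          using Bb that by (intro sum_mono) (auto simp: abs_mult intro: mult_left_mono)
        finally show ?thesis .
      qed
      also have "\<dots> = s * B" unfolding s_def by (simp add: sum_distrib_right)
      finally show ?thesis using g1[OF that] sb by linarith
    qed
    have gsol: "\<forall>j<K. (\<Sum>n=1..N. r N n * g (x n) * \<phi> j (x n)) = moments \<Omega> \<omega> \<phi> j"
    proof (intro allI impI)
      fix j assume j: "j < K"
      have "(\<Sum>n=1..N. r N n * g (x n) * \<phi> j (x n))
          = (\<Sum>n=1..N. r N n * \<phi> j (x n)) + (\<Sum>n=1..N. \<Sum>k<K. c k * (r N n * \<phi> j (x n) * \<phi> k (x n)))"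
        using g1 pts by (simp add: sum.distrib[symmetric] distrib_left distrib_right sum_distrib_left sum_distrib_right mult_ac)
      also have "(\<Sum>n=1..N. \<Sum>k<K. c k * (r N n * \<phi> j (x n) * \<phi> k (x n))) = (\<Sum>k<K. G N j k * c k)"
        unfolding G_def by (subst sum.swap) (simp add: sum_distrib_left sum_distrib_right mult_ac)
      also have "\<dots> = e N j" using c j by simp
      finally show "(\<Sum>n=1..N. r N n * g (x n) * \<phi> j (x n)) = moments \<Omega> \<omega> \<phi> j"
        unfolding e_def by simp
    qed
    have "LS_weights \<phi> K (moments \<Omega> \<omega> \<phi>) x (r N) N = (\<lambda>n. if n \<in> {1..N} then r N n * g (x n) else 0)"
      by (rule LS_char[where b = "\<lambda>k. a k + c k"]) (use r_nonneg gsol in \<open>auto simp: g_def\<close>)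
    hence "LS_weights \<phi> K (moments \<Omega> \<omega> \<phi>) x (r N) N n = r N n * g (x n)" using n by simp
    also have "\<dots> \<ge> 0" using r_nonneg n gpos[OF pts[rule_format, of n]] by simp
    finally show "LS_weights \<phi> K (moments \<Omega> \<omega> \<phi>) x (r N) N n \<ge> 0" .
  qed
qed

end
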